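(* For $(c,d)\in\mathbb{C}\times\mathbb{C}^*$ let $f_{c,d}(z) = 1 + \frac cz + \frac d{z^2}$, with critical points $0$ and $-2d/c$ ($=\infty$ when $c=0$), and identify $(c,d)$ with $[c:d:1]\in\mathbb{CP}^2$. For $j\ge 1$ let $\mathcal{P}_j = \{(c,d)\in\mathbb{C}\times\mathbb{C}^* : f_{c,d}^j(0) = -2d/c\}$ and $\mathcal{Q}_j = \{(c,d)\in\mathbb{C}\times\mathbb{C}^* : f_{c,d}^j(-2d/c) = 0\}$, with closures $\overline{\mathcal{P}_j}$, $\overline{\mathcal{Q}_j}$ in $\mathbb{CP}^2$. If $[c:0:1]\in\overline{\mathcal{P}_j}\cup\overline{\mathcal{Q}_j}$, then either $c=0$, or there are integers $q\ge 3$ and $p$ with $\gcd(p,q)=1$ such that $c^{-1} = -4\cos^2(\pi p/q)$. *)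

theory Defs
  imports "HOL-Analysis.Analysis"
begin

text \<open>Points of the Riemann sphere are represented as complex option, with None the point at infinity.\<close>

definition fcd :: "complex \<Rightarrow> complex \<Rightarrow> complex option \<Rightarrow> complex option" where
  "fcd c d w = (case w of
      None \<Rightarrow> Some 1
    | Some z \<Rightarrow> (if z = 0 then None else Some (1 + c / z + d / z^2)))"

definition crit :: "complex \<Rightarrow> complex \<Rightarrow> complex option" where
  "crit c d = (if c = 0 then None else Some (- 2 * d / c))"

definition Pset :: "nat \<Rightarrow> (complex \<times> complex) set" where
  "Pset j = {(c, d). d \<noteq> 0 \<and> (fcd c d ^^ j) (Some 0) = crit c d}"

definition Qset :: "nat \<Rightarrow> (complex \<times> complex) set" where
  "Qset j = {(c, d). d \<noteq> 0 \<and> (fcd c d ^^ j) (crit c d) = Some 0}"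

end

theory Submission
  imports Defs
begin


fun aseq :: "complex \<Rightarrow> nat \<Rightarrow> complex" where
  "aseq c 0 = 0" | "aseq c (Suc 0) = 1" | "aseq c (Suc (Suc n)) = aseq c (Suc n) + c * aseq c n"

lemma aseq_deg:
  assumes "(c::complex) = -1/4"
  shows "2^n * aseq c n = 2 * of_nat n \<and> 2^(Suc n) * aseq c (Suc n) = 2 * of_nat (Suc n)"
proof (induction n)
  case 0 then show ?case by simp
next
  case (Suc n)
  have "2^(Suc (Suc n)) * aseq c (Suc (Suc n)) = 2 * (2^Suc n * aseq c (Suc n)) - (2^n * aseq c n)"
    using assms by (simp add: algebra_simps)
  also have "\<dots> = 2 * (2 * of_nat (Suc n)) - 2 * of_nat n" using Suc by (simp only:)
  also have "\<dots> = 2 * of_nat (Suc (Suc n))" by (simp add: algebra_simps)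
  finally show ?case using Suc by simp
qed

lemma aseq_closed:
  fixes l1 l2 :: complex
  assumes "l1 + l2 = 1" "l1 * l2 = - c"
  shows "(l1 - l2) * aseq c n = l1^n - l2^n \<and> (l1 - l2) * aseq c (Suc n) = l1^Suc n - l2^Suc n"
proof (induction n)
  case 0 then show ?case by simp
next
  case (Suc n)
  have "(l1 - l2) * aseq c (Suc (Suc n)) = (l1 - l2) * aseq c (Suc n) + c * ((l1 - l2) * aseq c n)"
    by (simp add: algebra_simps)
  also have "\<dots> = (l1^Suc n - l2^Suc n) + c * (l1^n - l2^n)" using Suc by simp
  also have "\<dots> = (l1 + l2) * (l1^Suc n - l2^Suc n) - (l1*l2) * (l1^n - l2^n)"
    using assms by simp
  also have "\<dots> = l1^Suc (Suc n) - l2^Suc(Suc n)" by (simp add: algebra_simps)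
  finally show ?case using Suc by simp
qed

lemma alg:
  assumes c: "c \<noteq> 0" and N: "N \<ge> 1" and a: "aseq c N = 0"
  shows "\<exists>p q :: int. q \<ge> 3 \<and> gcd p q = 1 \<and>
           inverse c = complex_of_real (- 4 * (cos (pi * real_of_int p / real_of_int q))^2)"
proof -
  define s where "s = csqrt (1 + 4*c)"
  define l1 where "l1 = (1 + s)/2"
  define l2 where "l2 = (1 - s)/2"
  have s2: "s^2 = 1 + 4*c" unfolding s_def by simp
  have sum: "l1 + l2 = 1" unfolding l1_def l2_def by (simp add: field_simps)
  have prod: "l1 * l2 = - c" unfolding l1_def l2_def using s2
    by (simp add: field_simps power2_eq_square)
  have s0: "s \<noteq> 0"
  proof
    assume "s = 0"
    then have "1 + c * 4 = 0" using s2 by (simp add: field_simps)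
    then have "c * 4 = -1" by (simp add: eq_neg_iff_add_eq_0 add.commute)
    then have "c = -1/4" by (simp add: field_simps)
    from aseq_deg[OF this, of N] a N show False by simp
  qed
  have l2: "l2 \<noteq> 0" using prod c by auto
  have l12: "l1 - l2 = s" unfolding l1_def l2_def by (simp add: field_simps)
  have "l1^N = l2^N" using aseq_closed[OF sum prod, of N] a by (simp add: l12)
  define w where "w = l1 / l2"
  have wN: "w^N = 1" unfolding w_def using \<open>l1^N = l2^N\<close> l2 by (simp add: power_divide)
  have w1: "w \<noteq> 1" unfolding w_def using l2 l12 s0 by auto
  have wm1: "w \<noteq> -1" unfolding w_def using l2 sum by (auto simp: field_simps)
  have "w \<in> (\<lambda>k. cis (2 * pi * real k / real N)) ` {..<N}"
    using Complex.bij_betw_roots_unity[of N] N wN unfolding bij_betw_def by auto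
  then obtain k where k: "k < N" "w = cis (2 * pi * real k / real N)" by auto
  define g where "g = gcd (int k) (int N)"
  define p where "p = int k div g"
  define q where "q = int N div g"
  have gpos: "g > 0" unfolding g_def using N by simp
  have kp: "int k = p * g" unfolding p_def g_def by simp
  have Nq: "int N = q * g" unfolding q_def g_def by simp
  have qpos: "q > 0" proof -
    have "q * g > 0" using Nq[symmetric] N by simp
    then show ?thesis using gpos zero_less_mult_pos2 by blast
  qed
  have cop: "gcd p q = 1" unfolding p_def q_def g_def using div_gcd_coprime[of "int k" "int N"] N by simp
  have frac: "real k / real N = real_of_int p / real_of_int q"
  proof -
    have "real k = real_of_int p * real_of_int g" using kp by (metis of_int_mult of_int_of_nat_eq)
    moreover have "real N = real_of_int q * real_of_int g" using Nq by (metis of_int_mult of_int_of_nat_eq)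
    ultimately show ?thesis using gpos by simp
  qed
  define x where "x = pi * real_of_int p / real_of_int q"
  have "2 * pi * real k / real N = 2 * pi * (real k / real N)" by simp
  also have "\<dots> = 2 * x" unfolding frac x_def by simp
  finally have wx: "w = cis (2 * x)" using k(2) by simp
  have wq: "w ^ nat q = 1"
  proof -
    have "w ^ nat q = cis (real (nat q) * (2 * x))" unfolding wx by (rule Complex.DeMoivre)
    also have "real (nat q) * (2 * x) = 2 * pi * real_of_int p" unfolding x_def using qpos by simp
    also have "cis (2 * pi * real_of_int p) = 1" by simp
    finally show ?thesis .
  qed
  have q3: "q \<ge> 3"
  proof (rule ccontr)
    assume "\<not> q \<ge> 3"
    then have "q = 1 \<or> q = 2" using qpos by auto
    then show False
    proof
      assume "q = 1" then show False using wq w1 by simp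
    next
      assume "q = 2" then have "w^2 = 1" using wq by simp
      then have "(w - 1) * (w + 1) = 0" by (simp add: algebra_simps power2_eq_square)
      then show False using w1 wm1 by (simp add: add_eq_0_iff2)
    qed
  qed
  have "w + 2 + inverse w = inverse (- c)"
  proof -
    have l1: "l1 \<noteq> 0" using prod c by auto
    have "w + 2 + inverse w = (l1 + l2)^2 / (l1 * l2)" unfolding w_def using l1 l2
      by (simp add: field_simps power2_eq_square)
    then show ?thesis using sum prod by (simp add: divide_inverse)
  qed
  moreover have "w + 2 + inverse w = complex_of_real (2 + 2 * cos (2 * x))"
    unfolding wx by (simp add: cis.ctr complex_eq_iff)
  moreover have "cos (2 * x) = 2 * (cos x)^2 - 1" by (simp add: cos_double_cos)
  ultimately have "inverse c = complex_of_real (- (2 + 2 * (2 * (cos x)^2 - 1)))"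
    by (metis inverse_minus_eq minus_minus of_real_minus)
  then have "inverse c = complex_of_real (- 4 * (cos x)^2)" by simp
  then have "inverse c = complex_of_real (- 4 * (cos (pi * real_of_int p / real_of_int q))^2)" unfolding x_def .
  then show ?thesis using q3 cop by (intro exI[of _ p] exI[of _ q]) simp
qed


definition sconv :: "(nat \<Rightarrow> complex option) \<Rightarrow> complex option \<Rightarrow> bool" where
  "sconv u w = (case w of
     None \<Rightarrow> (\<forall>M. eventually (\<lambda>n. case u n of None \<Rightarrow> True | Some x \<Rightarrow> M < norm x) sequentially)
   | Some a \<Rightarrow> (eventually (\<lambda>n. u n \<noteq> None) sequentially \<and> ((\<lambda>n. the (u n)) \<longlonglongrightarrow> a)))"

lemma sconv_SomeI:
  assumes "eventually (\<lambda>n. u n = Some (F n)) sequentially" "F \<longlonglongrightarrow> a"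
  shows "sconv u (Some a)"
  unfolding sconv_def
proof (simp, intro conjI)
  show "eventually (\<lambda>n. \<exists>y. u n = Some y) sequentially"
    using assms(1) by (rule eventually_mono) auto
  show "(\<lambda>n. the (u n)) \<longlonglongrightarrow> a"
    using assms(2) by (rule Lim_transform_eventually) (use assms(1) in \<open>rule eventually_mono, auto\<close>)
qed

lemma sconv_unique:
  assumes "sconv u (Some a)" "sconv u w"
  shows "w = Some a"
proof (cases w)
  case None
  have e1: "eventually (\<lambda>n. u n \<noteq> None) sequentially"
    and t: "(\<lambda>n. the (u n)) \<longlonglongrightarrow> a" using assms(1) by (auto simp: sconv_def)
  have e2: "eventually (\<lambda>n. dist (the (u n)) a < 1) sequentially"
    using t by (simp add: tendsto_iff)
  have e3: "eventually (\<lambda>n. case u n of None \<Rightarrow> True | Some x \<Rightarrow> norm a + 1 < norm x) sequentially"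
    using assms(2) None by (auto simp: sconv_def)
  have "eventually (\<lambda>n. False) sequentially"
    using eventually_conj[OF e1 eventually_conj[OF e2 e3]]
  proof (rule eventually_mono)
    fix n assume h: "u n \<noteq> None \<and> dist (the (u n)) a < 1 \<and>
       (case u n of None \<Rightarrow> True | Some x \<Rightarrow> norm a + 1 < norm x)"
    then obtain x where x: "u n = Some x" by auto
    with h have "dist x a < 1" "norm a + 1 < norm x" by auto
    moreover have "norm x \<le> norm a + dist x a"
      using norm_triangle_sub[of x a] by (simp add: dist_norm)
    ultimately show False by simp
  qed
  then show ?thesis by simp
next
  case (Some b)
  then show ?thesis using assms by (auto simp: sconv_def intro: LIMSEQ_unique)
qed

lemma sconv_step:
  assumes cs: "cs \<longlonglongrightarrow> c" and ds: "ds \<longlonglongrightarrow> 0" and u: "sconv u w" and w: "w \<noteq> Some 0"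
  shows "sconv (\<lambda>n. fcd (cs n) (ds n) (u n)) (fcd c 0 w)"
proof (cases w)
  case None
  define v where "v n = (case u n of None \<Rightarrow> 0 | Some x \<Rightarrow> inverse x)" for n
  have uM: "\<And>M. eventually (\<lambda>n. case u n of None \<Rightarrow> True | Some x \<Rightarrow> M < norm x) sequentially"
    using u None by (auto simp: sconv_def)
  have v0: "v \<longlonglongrightarrow> 0"
    unfolding tendsto_iff
  proof (intro allI impI)
    fix e :: real assume e: "e > 0"
    show "eventually (\<lambda>n. dist (v n) 0 < e) sequentially"
      using uM[of "1/e"]
    proof (rule eventually_mono)
      fix n assume h: "case u n of None \<Rightarrow> True | Some x \<Rightarrow> 1/e < norm x"
      show "dist (v n) 0 < e"
      proof (cases "u n")
        case None then show ?thesis using e by (simp add: v_def)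
      next
        case (Some x)
        then have "1/e < norm x" using h by simp
        then have "inverse (norm x) < inverse (1/e)" using e
          by (intro less_imp_inverse_less) auto
        then have "inverse (norm x) < e" by simp
        then show ?thesis using Some by (simp add: v_def norm_inverse)
      qed
    qed
  qed
  have ev: "eventually (\<lambda>n. fcd (cs n) (ds n) (u n) = Some (1 + cs n * v n + ds n * (v n)^2)) sequentially"
    using uM[of 0]
  proof (rule eventually_mono)
    fix n assume h: "case u n of None \<Rightarrow> True | Some x \<Rightarrow> 0 < norm x"
    show "fcd (cs n) (ds n) (u n) = Some (1 + cs n * v n + ds n * (v n)^2)"
    proof (cases "u n")
      case None then show ?thesis by (simp add: v_def fcd_def)
    next
      case (Some x)
      then have "x \<noteq> 0" using h by auto
      then show ?thesis using Some by (simp add: v_def fcd_def divide_inverse power_inverse)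
    qed
  qed
  have lim: "(\<lambda>n. 1 + cs n * v n + ds n * (v n)^2) \<longlonglongrightarrow> 1 + c * 0 + 0 * 0^2"
    by (intro tendsto_intros cs ds v0)
  show ?thesis using sconv_SomeI[OF ev] lim None by (simp add: fcd_def)
next
  case (Some a)
  then have a: "a \<noteq> 0" using w by simp
  have e1: "eventually (\<lambda>n. u n \<noteq> None) sequentially"
    and t: "(\<lambda>n. the (u n)) \<longlonglongrightarrow> a" using u Some by (auto simp: sconv_def)
  have e2: "eventually (\<lambda>n. the (u n) \<noteq> 0) sequentially"
    using tendsto_imp_eventually_ne[OF t a] .
  have ev: "eventually (\<lambda>n. fcd (cs n) (ds n) (u n) =
     Some (1 + cs n / the (u n) + ds n / (the (u n))^2)) sequentially"
    using eventually_conj[OF e1 e2] by (rule eventually_mono) (auto simp: fcd_def)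
  have lim: "(\<lambda>n. 1 + cs n / the (u n) + ds n / (the (u n))^2) \<longlonglongrightarrow> 1 + c / a + 0 / a^2"
    by (intro tendsto_intros cs ds t) (use a in auto)
  show ?thesis using sconv_SomeI[OF ev lim] Some a by (simp add: fcd_def)
qed

lemma sconv_iter:
  assumes cs: "cs \<longlonglongrightarrow> c" and ds: "ds \<longlonglongrightarrow> 0"
    and base: "sconv (\<lambda>n. fcd (cs n) (ds n) (s n)) None"
  shows "k \<ge> 1 \<Longrightarrow> (\<forall>i. 1 \<le> i \<and> i < k \<longrightarrow> (fcd c 0 ^^ i) (Some 0) \<noteq> Some 0) \<Longrightarrow>
    sconv (\<lambda>n. (fcd (cs n) (ds n) ^^ k) (s n)) ((fcd c 0 ^^ k) (Some 0))"
proof (induction k)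
  case 0 then show ?case by simp
next
  case (Suc k)
  show ?case
  proof (cases "k = 0")
    case True then show ?thesis using base by (simp add: fcd_def)
  next
    case False
    then have IH: "sconv (\<lambda>n. (fcd (cs n) (ds n) ^^ k) (s n)) ((fcd c 0 ^^ k) (Some 0))"
      using Suc by auto
    have "(fcd c 0 ^^ k) (Some 0) \<noteq> Some 0" using Suc.prems False by auto
    from sconv_step[OF cs ds IH this] show ?thesis by simp
  qed
qed

lemma aseq_nz: "c \<noteq> 0 \<Longrightarrow> \<not> (aseq c n = 0 \<and> aseq c (Suc n) = 0)"
proof (induction n)
  case 0 then show ?case by simp
next
  case (Suc n) then show ?case by auto
qed

lemma orbit: assumes c: "c \<noteq> 0"
  shows "(fcd c 0 ^^ Suc m) (Some 0) =
    (if aseq c m = 0 then None else Some (aseq c (Suc m) / aseq c m))"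
proof (induction m)
  case 0 then show ?case by (simp add: fcd_def)
next
  case (Suc m)
  have nz: "\<not> (aseq c m = 0 \<and> aseq c (Suc m) = 0)" using aseq_nz[OF c] .
  show ?case
  proof (cases "aseq c m = 0")
    case True
    then show ?thesis using Suc nz by (simp add: fcd_def)
  next
    case False
    then show ?thesis using Suc c by (auto simp: fcd_def field_simps)
  qed
qed

lemma orbit_zero:
  assumes c: "c \<noteq> 0" and i: "i \<ge> 1" and w: "(fcd c 0 ^^ i) (Some 0) = Some 0"
  shows "aseq c i = 0"
proof -
  obtain m where m: "i = Suc m" using i by (cases i) auto
  have h: "(if aseq c m = 0 then None else Some (aseq c (Suc m) / aseq c m)) = Some 0"
    using w orbit[OF c, of m] unfolding m by simp
  show ?thesis
  proof (cases "aseq c m = 0")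
    case True then show ?thesis using h by simp
  next
    case False then show ?thesis using h m by simp
  qed
qed



lemma conclude:
  assumes c: "c \<noteq> 0" and j: "j \<ge> 1"
    and cs: "cs \<longlonglongrightarrow> c" and ds: "ds \<longlonglongrightarrow> 0"
    and base: "sconv (\<lambda>n. fcd (cs n) (ds n) (s n)) None"
    and fin: "sconv (\<lambda>n. (fcd (cs n) (ds n) ^^ j) (s n)) (Some 0)"
  shows "\<exists>p q :: int. q \<ge> 3 \<and> gcd p q = 1 \<and>
           inverse c = complex_of_real (- 4 * (cos (pi * real_of_int p / real_of_int q))^2)"
proof -
  have "\<exists>i. 1 \<le> i \<and> i \<le> j \<and> (fcd c 0 ^^ i) (Some 0) = Some 0"
  proof (rule ccontr)
    assume "\<not> ?thesis"
    then have h: "\<forall>i. 1 \<le> i \<and> i < j \<longrightarrow> (fcd c 0 ^^ i) (Some 0) \<noteq> Some 0"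
      and hj: "(fcd c 0 ^^ j) (Some 0) \<noteq> Some 0" using j by auto
    from sconv_iter[OF cs ds base j h] have "sconv (\<lambda>n. (fcd (cs n) (ds n) ^^ j) (s n)) ((fcd c 0 ^^ j) (Some 0))" .
    from sconv_unique[OF fin this] hj show False by simp
  qed
  then obtain i where i: "1 \<le> i" "(fcd c 0 ^^ i) (Some 0) = Some 0" by auto
  show ?thesis using alg[OF c i(1) orbit_zero[OF c i]] .
qed

theorem lemma3p4:
  fixes c :: complex and j :: nat
  assumes "j \<ge> 1"
    and "(c, 0) \<in> closure (Pset j) \<union> closure (Qset j)"
  shows "c = 0 \<or> (\<exists>p q :: int. q \<ge> 3 \<and> gcd p q = 1 \<and>
           inverse c = complex_of_real (- 4 * (cos (pi * real_of_int p / real_of_int q))^2))"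
proof (cases "c = 0")
  case True then show ?thesis by simp
next
  case False
  then have c: "c \<noteq> 0" .
  have main: "\<exists>p q :: int. q \<ge> 3 \<and> gcd p q = 1 \<and>
           inverse c = complex_of_real (- 4 * (cos (pi * real_of_int p / real_of_int q))^2)"
    if S: "S = Pset j \<or> S = Qset j" and cl: "(c, 0) \<in> closure S" for S
  proof -
    obtain x where x: "\<And>n. x n \<in> S" "x \<longlonglongrightarrow> (c, 0)"
      using cl closure_sequential by blast
    define cs where "cs n = fst (x n)" for n
    define ds where "ds n = snd (x n)" for n
    have cs: "cs \<longlonglongrightarrow> c" unfolding cs_def using tendsto_fst[OF x(2)] by simp
    have ds: "ds \<longlonglongrightarrow> 0" unfolding ds_def using tendsto_snd[OF x(2)] by simp
    have d0: "ds n \<noteq> 0" for n using x(1)[of n] S unfolding ds_def Pset_def Qset_def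
      by (cases "x n") auto
    have ecs: "eventually (\<lambda>n. cs n \<noteq> 0) sequentially"
      using tendsto_imp_eventually_ne[OF cs c] .
    have ecrit: "eventually (\<lambda>n. crit (cs n) (ds n) = Some (- 2 * ds n / cs n)) sequentially"
      using ecs by (rule eventually_mono) (simp add: crit_def)
    have limcrit: "(\<lambda>n. - 2 * ds n / cs n) \<longlonglongrightarrow> - 2 * 0 / c"
      by (intro tendsto_intros cs ds c)
    from S show ?thesis
    proof
      assume SP: "S = Pset j"
      have eq: "(fcd (cs n) (ds n) ^^ j) (Some 0) = crit (cs n) (ds n)" for n
        using x(1)[of n] unfolding SP Pset_def cs_def ds_def by (cases "x n") auto
      have base: "sconv (\<lambda>n. fcd (cs n) (ds n) (Some 0)) None"
        by (simp add: sconv_def fcd_def)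
      have fin: "sconv (\<lambda>n. (fcd (cs n) (ds n) ^^ j) (Some 0)) (Some 0)"
        using sconv_SomeI[OF _ limcrit] ecrit by (simp add: eq)
      show ?thesis by (rule conclude[OF c assms(1) cs ds base fin])
    next
      assume SQ: "S = Qset j"
      have eq: "(fcd (cs n) (ds n) ^^ j) (crit (cs n) (ds n)) = Some 0" for n
        using x(1)[of n] unfolding SQ Qset_def cs_def ds_def by (cases "x n") auto
      have fin: "sconv (\<lambda>n. (fcd (cs n) (ds n) ^^ j) (crit (cs n) (ds n))) (Some 0)"
        by (rule sconv_SomeI[of _ "\<lambda>n. 0"]) (simp_all add: eq)
      have inf: "filterlim (\<lambda>n. 1 + cs n ^ 2 * inverse (- 4 * ds n)) at_infinity sequentially"
      proof (rule tendsto_add_filterlim_at_infinity)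
        show "((\<lambda>n. 1::complex) \<longlongrightarrow> 1) sequentially" by (rule tendsto_const)
        show "filterlim (\<lambda>n. cs n ^ 2 * inverse (- 4 * ds n)) at_infinity sequentially"
        proof -
          have at0: "filterlim (\<lambda>n. - 4 * ds n) (at 0) sequentially"
          proof (rule filterlim_atI)
            show "(\<lambda>n. - 4 * ds n) \<longlonglongrightarrow> 0" using tendsto_mult[OF tendsto_const ds, of "-4"] by simp
            show "eventually (\<lambda>n. - 4 * ds n \<noteq> 0) sequentially" using d0 by simp
          qed
          have inv: "filterlim (\<lambda>n. inverse (- 4 * ds n)) at_infinity sequentially"
            using filterlim_compose[OF filterlim_inverse_at_infinity at0] .
          have t2: "(\<lambda>n. cs n ^ 2) \<longlonglongrightarrow> c^2" by (intro tendsto_intros cs)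
          have c2: "c^2 \<noteq> 0" using c by simp
          show "filterlim (\<lambda>n. cs n ^ 2 * inverse (- 4 * ds n)) at_infinity sequentially"
            by (rule tendsto_mult_filterlim_at_infinity[OF t2 c2 inv])
        qed
      qed
      have nt: "filterlim (\<lambda>n. norm (1 + cs n ^ 2 * inverse (- 4 * ds n))) at_top sequentially"
        by (rule filterlim_at_infinity_imp_norm_at_top[OF inf])
      have ef: "eventually (\<lambda>n. fcd (cs n) (ds n) (crit (cs n) (ds n)) = Some (1 + cs n ^ 2 * inverse (- 4 * ds n))) sequentially"
        using ecs
      proof (rule eventually_mono)
        fix n assume h: "cs n \<noteq> 0"
        have d: "ds n \<noteq> 0" by (rule d0)
        have cr: "crit (cs n) (ds n) = Some (-2 * ds n / cs n)" using h by (simp add: crit_def)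
        have w0: "-2 * ds n / cs n \<noteq> 0" using h d by simp
        have "fcd (cs n) (ds n) (Some (-2 * ds n / cs n)) =
           Some (1 + cs n / (-2 * ds n / cs n) + ds n / (-2 * ds n / cs n)^2)"
          using w0 by (simp add: fcd_def)
        also have "1 + cs n / (-2 * ds n / cs n) + ds n / (-2 * ds n / cs n)^2 = 1 + cs n ^ 2 * inverse (- 4 * ds n)"
          using h d by (simp add: field_simps power2_eq_square)
        finally show "fcd (cs n) (ds n) (crit (cs n) (ds n)) = Some (1 + cs n ^ 2 * inverse (- 4 * ds n))"
          unfolding cr .
      qed
      have base: "sconv (\<lambda>n. fcd (cs n) (ds n) (crit (cs n) (ds n))) None"
        unfolding sconv_def
      proof (simp, intro allI)
        fix M :: real
        have "eventually (\<lambda>n. M + 1 \<le> norm (1 + cs n ^ 2 * inverse (- 4 * ds n))) sequentially"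
          using nt by (simp add: filterlim_at_top)
        then show "eventually (\<lambda>n. case fcd (cs n) (ds n) (crit (cs n) (ds n)) of None \<Rightarrow> True
                    | Some x \<Rightarrow> M < norm x) sequentially"
          using ef by eventually_elim auto
      qed
      show ?thesis by (rule conclude[OF c assms(1) cs ds base fin])
    qed
  qed
  from assms(2) have "\<exists>S. (S = Pset j \<or> S = Qset j) \<and> (c, 0) \<in> closure S" by auto
  then show ?thesis using main by blast
qed

end
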